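(* For every $n\ge1$, $$\sum_{e\in\mathbf I_n(021)}t^{\mathrm{asc}(e)}=\sum_{k=0}^{\lfloor (n-1)/2\rfloor}\big|\widetilde{\mathbf I}_{n,k}(021)\big|\,t^k(1+t)^{n-1-2k}.$$
   Context: $\mathbf I_n=\{(e_1,\dots,e_n):0\le e_i\le i-1\}$; $\mathbf I_n(021)$ is the set of $e\in\mathbf I_n$ with no $i<j<k$ such that $e_i<e_k<e_j$. $\mathrm{ASC}(e)=\{i\in[n-1]:e_i<e_{i+1}\}$, $\mathrm{asc}(e)=|\mathrm{ASC}(e)|$. An index $i\in[n-2]$ is a double ascent of $e$ if $\{i,i+1\}\subseteq\mathrm{ASC}(e)$. $\widetilde{\mathbf I}_{n,k}(021)=\{e\in\mathbf I_n(021):\mathrm{asc}(e)=k,\ e\text{ has no double ascents, and } e_{n-1}\ge e_n\}$ (for $n=1$ the last condition is vacuous). *)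

theory Defs
  imports Main "HOL-Computational_Algebra.Polynomial"
begin

(* An inversion sequence e = (e_1,...,e_n) is represented as a list of length n,
   with e_i = e ! (i - 1) (1-based entries). *)

definition inv_seqs :: "nat \<Rightarrow> nat list set" where
  "inv_seqs n = {e. length e = n \<and> (\<forall>i\<in>{1..n}. e ! (i - 1) \<le> i - 1)}"

definition avoids021 :: "nat list \<Rightarrow> bool" where
  "avoids021 e = (\<not> (\<exists>i j k. 1 \<le> i \<and> i < j \<and> j < k \<and> k \<le> length e \<and>
      e ! (i - 1) < e ! (k - 1) \<and> e ! (k - 1) < e ! (j - 1)))"

definition I021 :: "nat \<Rightarrow> nat list set" where
  "I021 n = {e \<in> inv_seqs n. avoids021 e}"

definition ASC :: "nat list \<Rightarrow> nat set" where
  "ASC e = {i \<in> {1..length e - 1}. e ! (i - 1) < e ! i}"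

definition asc :: "nat list \<Rightarrow> nat" where
  "asc e = card (ASC e)"

definition no_double_ascent :: "nat list \<Rightarrow> bool" where
  "no_double_ascent e = (\<forall>i\<in>{1..length e - 2}. \<not> ({i, i + 1} \<subseteq> ASC e))"

(* \<tilde>I_{n,k}(021); for n = 1 the condition e_{n-1} \<ge> e_n is vacuous *)
definition I021_tilde :: "nat \<Rightarrow> nat \<Rightarrow> nat list set" where
  "I021_tilde n k = {e \<in> I021 n. asc e = k \<and> no_double_ascent e \<and>
      (n \<ge> 2 \<longrightarrow> e ! (n - 2) \<ge> e ! (n - 1))}"

end

theory Submission
  imports Defs
begin

fun aw :: "nat list \<Rightarrow> bool list" where
  "aw (x # y # r) = (x < y) # aw (y # r)"
| "aw _ = []"

fun noAA :: "bool list \<Rightarrow> bool" where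
  "noAA (x # y # r) = (\<not> (x \<and> y) \<and> noAA (y # r))"
| "noAA _ = True"

definition lastN :: "bool list \<Rightarrow> bool" where
  "lastN w = (w = [] \<or> \<not> last w)"

definition rep :: "bool list \<Rightarrow> bool" where
  "rep w = (noAA w \<and> lastN w)"

definition cnt :: "bool list \<Rightarrow> nat" where
  "cnt w = length (filter id w)"

lemma aw_append: "xs \<noteq> [] \<Longrightarrow> aw (xs @ y # ys) = aw xs @ (last xs < y) # aw (y # ys)"
proof (induction xs rule: aw.induct)
  case (1 x y r) then show ?case by simp
next
  case ("2_1") then show ?case by simp
next
  case ("2_2" v) then show ?case by simp
qed

lemma length_aw: "length (aw e) = length e - 1"
  by (induction e rule: aw.induct) auto

lemma aw_nth: "i + 1 < length e \<Longrightarrow> aw e ! i = (e ! i < e ! (i + 1))"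
proof (induction e arbitrary: i rule: aw.induct)
  case (1 x y r) then show ?case by (cases i) auto
qed auto

lemma aw_map: "(\<And>x y. f x < f y \<longleftrightarrow> x < y) \<Longrightarrow> aw (map f g) = aw g"
  by (induction g rule: aw.induct) auto

lemma noAA_append: "noAA (xs @ ys) \<longleftrightarrow> noAA xs \<and> noAA ys \<and> \<not> (xs \<noteq> [] \<and> ys \<noteq> [] \<and> last xs \<and> hd ys)"
proof (induction xs rule: noAA.induct)
  case (1 x y r) then show ?case by simp
next
  case ("2_1") then show ?case by simp
next
  case ("2_2" v) then show ?case by (cases ys) auto
qed

lemma noAA_False: "noAA (False # w) = noAA w"
  by (cases w) auto

lemma noAA_nth: "noAA w \<longleftrightarrow> (\<forall>i. i + 1 < length w \<longrightarrow> \<not> (w ! i \<and> w ! (i + 1)))"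
proof (induction w rule: noAA.induct)
  case (1 x y r)
  show ?case
  proof
    assume "noAA (x # y # r)"
    then show "\<forall>i. i + 1 < length (x # y # r) \<longrightarrow> \<not> ((x # y # r) ! i \<and> (x # y # r) ! (i + 1))"
      using 1 by (auto simp: nth_Cons split: nat.splits)
  next
    assume H: "\<forall>i. i + 1 < length (x # y # r) \<longrightarrow> \<not> ((x # y # r) ! i \<and> (x # y # r) ! (i + 1))"
    have "\<not> (x \<and> y)" using H[rule_format, of 0] by simp
    moreover have "noAA (y # r)" unfolding 1
    proof (intro allI impI)
      fix i assume "i + 1 < length (y # r)"
      then show "\<not> ((y # r) ! i \<and> (y # r) ! (i + 1))" using H[rule_format, of "Suc i"] by simp
    qed
    ultimately show "noAA (x # y # r)" by simp
  qed
qed auto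

lemma rep_cnt: "rep w \<Longrightarrow> 2 * cnt w \<le> length w"
proof (induction "length w" arbitrary: w rule: less_induct)
  case less
  show ?case
  proof (cases w)
    case Nil then show ?thesis by (simp add: cnt_def)
  next
    case (Cons x w1)
    show ?thesis
    proof (cases w1)
      case Nil then show ?thesis using less.prems Cons by (auto simp: cnt_def rep_def lastN_def)
    next
      case (Cons y r)
      note w = \<open>w = x # w1\<close> Cons
      show ?thesis
      proof (cases x)
        case True
        then have "\<not> y" using less.prems w by (auto simp: rep_def)
        have "rep r" using less.prems w \<open>\<not> y\<close> by (cases r) (auto simp: rep_def lastN_def noAA_False)
        then have "2 * cnt r \<le> length r" using less.hyps[of r] w by auto
        then show ?thesis using w True \<open>\<not> y\<close> by (simp add: cnt_def)
      next
        case False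
        have "rep (y # r)" using less.prems w by (auto simp: rep_def lastN_def)
        then have "2 * cnt (y # r) \<le> length (y # r)" using less.hyps[of "y # r"] w by auto
        then show ?thesis using w False by (simp add: cnt_def)
      qed
    qed
  qed
qed

definition pinc :: "nat list \<Rightarrow> bool" where
  "pinc e = (\<forall>j k. j < k \<longrightarrow> k < length e \<longrightarrow> 0 < e ! k \<longrightarrow> e ! j \<le> e ! k)"

lemma pinc_Nil[simp]: "pinc []" by (simp add: pinc_def)

lemma pinc_Cons: "pinc (x # l) \<longleftrightarrow> pinc l \<and> (\<forall>y\<in>set l. 0 < y \<longrightarrow> x \<le> y)"
proof
  assume H: "pinc (x # l)"
  have "pinc l" unfolding pinc_def
  proof (intro allI impI)
    fix j k assume "j < k" "k < length l" "0 < l ! k"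
    then show "l ! j \<le> l ! k" using H[unfolded pinc_def, rule_format, of "Suc j" "Suc k"] by simp
  qed
  moreover have "\<forall>y\<in>set l. 0 < y \<longrightarrow> x \<le> y"
  proof (intro ballI impI)
    fix y assume "y \<in> set l" "0 < y"
    then obtain k where "k < length l" "l ! k = y" by (auto simp: in_set_conv_nth)
    then show "x \<le> y" using H[unfolded pinc_def, rule_format, of 0 "Suc k"] \<open>0 < y\<close> by simp
  qed
  ultimately show "pinc l \<and> (\<forall>y\<in>set l. 0 < y \<longrightarrow> x \<le> y)" by blast
next
  assume H: "pinc l \<and> (\<forall>y\<in>set l. 0 < y \<longrightarrow> x \<le> y)"
  show "pinc (x # l)" unfolding pinc_def
  proof (intro allI impI)
    fix j k assume jk: "j < k" "k < length (x # l)" "0 < (x # l) ! k"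
    then obtain k' where k': "k = Suc k'" by (cases k) auto
    show "(x # l) ! j \<le> (x # l) ! k"
    proof (cases j)
      case 0 then show ?thesis using H jk k' nth_mem[of k' l] by auto
    next
      case (Suc j') then show ?thesis using H jk k' by (auto simp: pinc_def)
    qed
  qed
qed

lemma pinc_append: "pinc (a @ b) \<longleftrightarrow> pinc a \<and> pinc b \<and> (\<forall>x\<in>set a. \<forall>y\<in>set b. 0 < y \<longrightarrow> x \<le> y)"
  by (induction a) (auto simp: pinc_Cons)

lemma pinc_map: "pinc g \<Longrightarrow> (\<And>x y. x \<le> y \<Longrightarrow> f x \<le> f y) \<Longrightarrow> (\<And>x. 0 < f x \<Longrightarrow> 0 < x) \<Longrightarrow> pinc (map f g)"
  unfolding pinc_def by auto

definition J :: "nat \<Rightarrow> nat \<Rightarrow> nat list set" where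
  "J d m = {g. length g = m \<and> (\<forall>r<m. g ! r = 0 \<or> (d < g ! r \<and> g ! r \<le> d + r + 1)) \<and> pinc g}"

lemma finite_J: "finite (J d m)"
proof -
  have "J d m \<subseteq> {g. set g \<subseteq> {0..d+m} \<and> length g = m}"
  proof
    fix g assume g: "g \<in> J d m"
    have "\<forall>x\<in>set g. x \<le> d + m"
    proof
      fix x assume "x \<in> set g"
      then obtain r where "r < m" "g ! r = x" using g by (auto simp: J_def in_set_conv_nth)
      then show "x \<le> d + m" using g by (auto simp: J_def)
    qed
    then show "g \<in> {g. set g \<subseteq> {0..d+m} \<and> length g = m}" using g by (auto simp: J_def)
  qed
  moreover have "finite {g. set g \<subseteq> {0..d+m} \<and> length g = m}"
    by (rule finite_lists_length_eq) simp
  ultimately show ?thesis by (rule finite_subset)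
qed

lemma J0_Nil: "J d 0 = {[]}"
  by (auto simp: J_def)

definition sh :: "nat \<Rightarrow> nat \<Rightarrow> nat" where
  "sh d x = (if x = 0 then 0 else x + d)"

lemma sh_less: "sh d x < sh d y \<longleftrightarrow> x < y"
  by (auto simp: sh_def)

lemma J_shift: "map (sh d) ` J 0 k = J d k"
proof
  show "map (sh d) ` J 0 k \<subseteq> J d k"
  proof
    fix b assume "b \<in> map (sh d) ` J 0 k"
    then obtain g where g: "g \<in> J 0 k" "b = map (sh d) g" by auto
    have "pinc b" unfolding g(2) using g(1) by (intro pinc_map) (auto simp: J_def sh_def split: if_splits)
    then show "b \<in> J d k" using g by (auto simp: J_def sh_def)
  qed
next
  show "J d k \<subseteq> map (sh d) ` J 0 k"
  proof
    fix b assume b: "b \<in> J d k"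
    define g where "g = map (\<lambda>x. if x = 0 then 0 else x - d) b"
    have bs: "\<forall>x\<in>set b. x = 0 \<or> d < x"
    proof
      fix x assume "x \<in> set b"
      then obtain i where "i < k" "b ! i = x" using b by (auto simp: J_def in_set_conv_nth)
      then show "x = 0 \<or> d < x" using b by (auto simp: J_def)
    qed
    have "map (sh d) g = map (sh d \<circ> (\<lambda>x. if x = 0 then 0 else x - d)) b" unfolding g_def by simp
    also have "\<dots> = b" by (rule map_idI) (use bs in \<open>auto simp: sh_def\<close>)
    finally have "map (sh d) g = b" .
    moreover have "pinc g" unfolding g_def using b by (intro pinc_map) (auto simp: J_def split: if_splits)
    moreover have "g \<in> J 0 k"
    proof -
      have "\<forall>r<k. g ! r = 0 \<or> (0 < g ! r \<and> g ! r \<le> 0 + r + 1)"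
      proof (intro allI impI)
        fix r assume "r < k"
        then have "b ! r = 0 \<or> (d < b ! r \<and> b ! r \<le> d + r + 1)" using b by (simp add: J_def)
        moreover have "g ! r = (if b ! r = 0 then 0 else b ! r - d)" using \<open>r < k\<close> b by (simp add: g_def J_def)
        ultimately show "g ! r = 0 \<or> (0 < g ! r \<and> g ! r \<le> 0 + r + 1)" by auto
      qed
      then show ?thesis using b \<open>pinc g\<close> by (simp add: J_def g_def)
    qed
    ultimately show "b \<in> map (sh d) ` J 0 k" by force
  qed
qed

lemma inj_sh: "inj_on (map (sh d)) A"
proof -
  have "inj (sh d)" by (auto simp: inj_def sh_def split: if_splits)
  then have "inj (map (sh d))" by (rule inj_mapI)
  then show ?thesis by (rule inj_on_subset) simp
qed

lemma sum_shift: "(\<Sum>b\<in>J d k. F b) = (\<Sum>b\<in>J 0 k. F (map (sh d) b))"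
proof -
  have "(\<Sum>b\<in>J d k. F b) = (\<Sum>b\<in>map (sh d) ` J 0 k. F b)" by (simp add: J_shift)
  also have "\<dots> = (\<Sum>b\<in>J 0 k. F (map (sh d) b))" by (rule sum.reindex_cong[OF inj_sh]) auto
  finally show ?thesis .
qed

lemma J_bound: "g \<in> J d m \<Longrightarrow> r < m \<Longrightarrow> g ! r \<le> d + r + 1"
  by (auto simp: J_def)

lemma J0_set_le: "a \<in> J 0 r \<Longrightarrow> x \<in> set a \<Longrightarrow> x \<le> r"
proof -
  assume a: "a \<in> J 0 r" and x: "x \<in> set a"
  then obtain i where "i < r" "a ! i = x" by (auto simp: J_def in_set_conv_nth)
  then show "x \<le> r" using J_bound[OF a \<open>i < r\<close>] by simp
qed

lemma J_len: "g \<in> J d m \<Longrightarrow> length g = m"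
  by (simp add: J_def)

lemma J_pos: "b \<in> J d m \<Longrightarrow> y \<in> set b \<Longrightarrow> 0 < y \<Longrightarrow> d < y"
proof -
  assume b: "b \<in> J d m" and y: "y \<in> set b" "0 < y"
  then obtain i where "i < m" "b ! i = y" by (auto simp: J_def in_set_conv_nth)
  then show "d < y" using b y by (auto simp: J_def)
qed

lemma Cons0_J: "g \<in> J 0 m \<Longrightarrow> 0 # g \<in> J 0 (Suc m)"
proof -
  assume g: "g \<in> J 0 m"
  have "\<forall>r<Suc m. (0 # g) ! r = 0 \<or> (0 < (0 # g) ! r \<and> (0 # g) ! r \<le> 0 + r + 1)"
  proof (intro allI impI)
    fix r assume "r < Suc m"
    show "(0 # g) ! r = 0 \<or> (0 < (0 # g) ! r \<and> (0 # g) ! r \<le> 0 + r + 1)"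
    proof (cases r)
      case (Suc r')
      then have "r' < m" using \<open>r < Suc m\<close> by simp
      then have "g ! r' = 0 \<or> (0 < g ! r' \<and> g ! r' \<le> 0 + r' + 1)" using g by (simp add: J_def)
      then show ?thesis using Suc by auto
    qed simp
  qed
  moreover have "pinc (0 # g)" using g by (simp add: pinc_Cons J_def)
  ultimately show ?thesis using g by (simp add: J_def)
qed

lemma cat_nth:
  assumes a: "a \<in> J 0 r" and b: "b \<in> J r k" and i: "i < Suc (r + k)"
  shows "(a @ Suc r # b) ! i = (if i < r then a ! i else if i = r then Suc r else b ! (i - Suc r))"
proof -
  have la: "length a = r" using J_len[OF a] .
  show ?thesis
  proof (cases "i < r")
    case True then show ?thesis using la by (simp add: nth_append)
  next
    case False
    then have "(a @ Suc r # b) ! i = (Suc r # b) ! (i - r)" using la by (simp add: nth_append)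
    moreover have "i = r \<or> i - r = Suc (i - Suc r)" using False by auto
    ultimately show ?thesis using False by auto
  qed
qed

lemma cat_J:
  assumes a: "a \<in> J 0 r" and b: "b \<in> J r k"
  shows "a @ Suc r # b \<in> J 0 (Suc (r + k))"
proof -
  have la: "length a = r" and lb: "length b = k" using a b by (auto simp: J_def)
  have "\<forall>i<Suc (r + k). (a @ Suc r # b) ! i = 0 \<or> (0 < (a @ Suc r # b) ! i \<and> (a @ Suc r # b) ! i \<le> 0 + i + 1)"
  proof (intro allI impI)
    fix i assume i: "i < Suc (r + k)"
    show "(a @ Suc r # b) ! i = 0 \<or> (0 < (a @ Suc r # b) ! i \<and> (a @ Suc r # b) ! i \<le> 0 + i + 1)"
    proof (cases "i < r")
      case True
      then have "a ! i = 0 \<or> (0 < a ! i \<and> a ! i \<le> 0 + i + 1)" using a by (simp add: J_def)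
      then show ?thesis using cat_nth[OF a b i] True by simp
    next
      case False
      show ?thesis
      proof (cases "i = r")
        case True then show ?thesis using cat_nth[OF a b i] by simp
      next
        case False
        then have "i - Suc r < k" using i \<open>\<not> i < r\<close> by simp
        then have "b ! (i - Suc r) = 0 \<or> (r < b ! (i - Suc r) \<and> b ! (i - Suc r) \<le> r + (i - Suc r) + 1)"
          using b by (simp add: J_def)
        then show ?thesis using cat_nth[OF a b i] False \<open>\<not> i < r\<close> by auto
      qed
    qed
  qed
  moreover have "pinc (a @ Suc r # b)"
  proof -
    have "pinc a" "pinc b" using a b by (auto simp: J_def)
    moreover have "\<forall>y\<in>set b. 0 < y \<longrightarrow> Suc r \<le> y" using J_pos[OF b] by (auto simp: Suc_le_eq)
    moreover have "\<forall>x\<in>set a. x \<le> r" using J0_set_le[OF a] by auto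
    ultimately show ?thesis unfolding pinc_append pinc_Cons by force
  qed
  ultimately show ?thesis using la lb by (simp add: J_def)
qed

lemma Cons0_noret: "g \<in> J 0 m \<Longrightarrow> i < Suc m \<Longrightarrow> (0 # g) ! i \<le> i"
  by (cases i) (auto dest: J_bound)

lemma cat_ret:
  assumes a: "a \<in> J 0 r" and b: "b \<in> J r k"
  shows "(a @ Suc r # b) ! r = Suc r"
    and "\<And>i. r < i \<Longrightarrow> i < Suc (r + k) \<Longrightarrow> (a @ Suc r # b) ! i \<le> i"
proof -
  show "(a @ Suc r # b) ! r = Suc r" using cat_nth[OF a b, of r] by simp
  fix i assume i: "r < i" "i < Suc (r + k)"
  then have "i - Suc r < k" by simp
  then have "b ! (i - Suc r) \<le> r + (i - Suc r) + 1" using J_bound[OF b] by simp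
  then show "(a @ Suc r # b) ! i \<le> i" using cat_nth[OF a b i(2)] i by simp
qed

lemma surj_decomp:
  assumes g: "g \<in> J 0 (Suc m)"
  shows "g \<in> Cons 0 ` J 0 m \<or> (\<exists>r<Suc m. \<exists>a\<in>J 0 r. \<exists>b\<in>J r (m - r). g = a @ Suc r # b)"
proof (cases "\<exists>i<Suc m. g ! i = Suc i")
  case False
  have lg: "length g = Suc m" using g by (simp add: J_def)
  then obtain x t where gt: "g = x # t" by (cases g) auto
  have "g ! 0 \<le> 1" using J_bound[OF g, of 0] by simp
  moreover have "g ! 0 \<noteq> 1" using False by auto
  ultimately have x0: "x = 0" using gt by simp
  have "t \<in> J 0 m"
  proof -
    have "\<forall>r<m. t ! r = 0 \<or> (0 < t ! r \<and> t ! r \<le> 0 + r + 1)"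
    proof (intro allI impI)
      fix r assume r: "r < m"
      have "g ! Suc r = 0 \<or> (0 < g ! Suc r \<and> g ! Suc r \<le> 0 + Suc r + 1)" using g r by (simp add: J_def)
      moreover have "g ! Suc r \<noteq> Suc (Suc r)" using False r by auto
      ultimately show "t ! r = 0 \<or> (0 < t ! r \<and> t ! r \<le> 0 + r + 1)" using gt by auto
    qed
    moreover have "pinc t" using g gt by (simp add: J_def pinc_Cons)
    ultimately show ?thesis using lg gt by (simp add: J_def)
  qed
  then show ?thesis using gt x0 by blast
next
  case True
  define R where "R = {i. i < Suc m \<and> g ! i = Suc i}"
  have finR: "finite R" unfolding R_def by simp
  have neR: "R \<noteq> {}" using True unfolding R_def by blast
  define r where "r = Max R"
  have rR: "r \<in> R" unfolding r_def using finR neR by (rule Max_in)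
  have rmax: "\<And>i. i \<in> R \<Longrightarrow> i \<le> r" unfolding r_def using finR by simp
  have lg: "length g = Suc m" using g by (simp add: J_def)
  have rm: "r < Suc m" and gr: "g ! r = Suc r" using rR by (auto simp: R_def)
  define a where "a = take r g"
  define b where "b = drop (Suc r) g"
  have geq: "g = a @ Suc r # b"
    unfolding a_def b_def using id_take_nth_drop[of r g] lg rm gr by simp
  have pg: "pinc g" using g by (simp add: J_def)
  then have pa: "pinc a" and pb: "pinc b" using geq by (auto simp: pinc_append pinc_Cons)
  have la: "length a = r" unfolding a_def using lg rm by simp
  have lb: "length b = m - r" unfolding b_def using lg by simp
  have aJ: "a \<in> J 0 r"
  proof -
    have "\<forall>i<r. a ! i = 0 \<or> (0 < a ! i \<and> a ! i \<le> 0 + i + 1)"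
    proof (intro allI impI)
      fix i assume i: "i < r"
      then have "g ! i = 0 \<or> (0 < g ! i \<and> g ! i \<le> 0 + i + 1)" using g rm by (simp add: J_def)
      then show "a ! i = 0 \<or> (0 < a ! i \<and> a ! i \<le> 0 + i + 1)" using i unfolding a_def by simp
    qed
    then show ?thesis using la pa by (simp add: J_def)
  qed
  have bJ: "b \<in> J r (m - r)"
  proof -
    have "\<forall>j<m - r. b ! j = 0 \<or> (r < b ! j \<and> b ! j \<le> r + j + 1)"
    proof (intro allI impI)
      fix j assume j: "j < m - r"
      have bj: "b ! j = g ! (Suc r + j)" unfolding b_def using j lg by simp
      have idx: "Suc r + j < Suc m" using j by simp
      show "b ! j = 0 \<or> (r < b ! j \<and> b ! j \<le> r + j + 1)"
      proof (cases "b ! j = 0")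
        case False
        have "g ! r \<le> g ! (Suc r + j)" using pg idx False bj lg unfolding pinc_def by simp
        then have "r < b ! j" using gr bj by simp
        moreover have "g ! (Suc r + j) \<le> 0 + (Suc r + j) + 1" using J_bound[OF g idx] by simp
        moreover have "Suc r + j \<notin> R" using rmax[of "Suc r + j"] by auto
        then have "g ! (Suc r + j) \<noteq> Suc (Suc r + j)" using idx by (auto simp: R_def)
        ultimately show ?thesis using bj by auto
      qed simp
    qed
    then show ?thesis using lb pb by (simp add: J_def)
  qed
  show ?thesis using geq aJ bJ rm by blast
qed

lemma sum_decomp:
  fixes f :: "nat list \<Rightarrow> 'a::comm_monoid_add"
  shows "(\<Sum>g\<in>J 0 (Suc m). f g) = (\<Sum>g\<in>J 0 m. f (0 # g)) +
     (\<Sum>r<Suc m. \<Sum>a\<in>J 0 r. \<Sum>b\<in>J r (m - r). f (a @ Suc r # b))"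
proof -
  define A0 where "A0 = Cons 0 ` J 0 m"
  define Ar where "Ar r = (\<lambda>(a, b). a @ Suc r # b) ` (J 0 r \<times> J r (m - r))" for r
  have eq: "J 0 (Suc m) = A0 \<union> (\<Union>r\<in>{..<Suc m}. Ar r)"
  proof
    show "J 0 (Suc m) \<subseteq> A0 \<union> (\<Union>r\<in>{..<Suc m}. Ar r)"
    proof
      fix g assume "g \<in> J 0 (Suc m)"
      from surj_decomp[OF this] show "g \<in> A0 \<union> (\<Union>r\<in>{..<Suc m}. Ar r)"
      proof
        assume "g \<in> Cons 0 ` J 0 m" then show ?thesis unfolding A0_def by (rule UnI1)
      next
        assume "\<exists>r<Suc m. \<exists>a\<in>J 0 r. \<exists>b\<in>J r (m - r). g = a @ Suc r # b"
        then obtain r a b where r: "r < Suc m" "a \<in> J 0 r" "b \<in> J r (m - r)" "g = a @ Suc r # b" by blast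
        then have "g \<in> Ar r" unfolding Ar_def by (intro image_eqI[of _ _ "(a, b)"]) auto
        then show ?thesis using r(1) by blast
      qed
    qed
  next
    have "A0 \<subseteq> J 0 (Suc m)" unfolding A0_def using Cons0_J by blast
    moreover have "Ar r \<subseteq> J 0 (Suc m)" if "r < Suc m" for r
    proof
      fix g assume "g \<in> Ar r"
      then obtain a b where ab: "a \<in> J 0 r" "b \<in> J r (m - r)" "g = a @ Suc r # b" unfolding Ar_def by auto
      have "Suc (r + (m - r)) = Suc m" using that by simp
      then show "g \<in> J 0 (Suc m)" using cat_J[OF ab(1,2)] ab(3) by simp
    qed
    ultimately show "A0 \<union> (\<Union>r\<in>{..<Suc m}. Ar r) \<subseteq> J 0 (Suc m)" by blast
  qed
  have finA0: "finite A0" unfolding A0_def using finite_J by simp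
  have finAr: "finite (Ar r)" for r unfolding Ar_def using finite_J by simp
  have ret: "g ! r = Suc r" and noret: "\<And>i. r < i \<Longrightarrow> i < Suc m \<Longrightarrow> g ! i \<le> i"
    if "g \<in> Ar r" "r < Suc m" for g r
  proof -
    obtain a b where ab: "a \<in> J 0 r" "b \<in> J r (m - r)" "g = a @ Suc r # b" using \<open>g \<in> Ar r\<close> unfolding Ar_def by auto
    have s: "Suc (r + (m - r)) = Suc m" using that by simp
    show "g ! r = Suc r" using cat_ret(1)[OF ab(1,2)] ab(3) by simp
    fix i assume "r < i" "i < Suc m"
    then show "g ! i \<le> i" using cat_ret(2)[OF ab(1,2), of i] ab(3) s by simp
  qed
  have disj0: "A0 \<inter> (\<Union>r\<in>{..<Suc m}. Ar r) = {}"
  proof (rule ccontr)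
    assume "A0 \<inter> (\<Union>r\<in>{..<Suc m}. Ar r) \<noteq> {}"
    then obtain g r where g: "g \<in> A0" "g \<in> Ar r" "r < Suc m" by blast
    then obtain t where t: "t \<in> J 0 m" "g = 0 # t" unfolding A0_def by auto
    have "g ! r \<le> r" using Cons0_noret[OF t(1) g(3)] t(2) by simp
    then show False using ret[OF g(2,3)] by simp
  qed
  have disjr: "\<forall>i\<in>{..<Suc m}. \<forall>j\<in>{..<Suc m}. i \<noteq> j \<longrightarrow> Ar i \<inter> Ar j = {}"
  proof (intro ballI impI)
    fix i j assume ij: "i \<in> {..<Suc m}" "j \<in> {..<Suc m}" "i \<noteq> j"
    have key: "Ar p \<inter> Ar q = {}" if "p < q" "q < Suc m" for p q
    proof (rule ccontr)
      assume "Ar p \<inter> Ar q \<noteq> {}"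
      then obtain g where "g \<in> Ar p" "g \<in> Ar q" by auto
      then have "g ! q \<le> q" "g ! q = Suc q" using ret[of g q] noret[of g p q] that by simp_all
      then show False by simp
    qed
    show "Ar i \<inter> Ar j = {}"
    proof (cases "i < j")
      case True then show ?thesis using key ij by auto
    next
      case False then have "j < i" using ij by simp
      then show ?thesis using key[of j i] ij by auto
    qed
  qed
  have inj: "inj_on (\<lambda>(a, b). a @ Suc r # b) (J 0 r \<times> J r k)" for r k
  proof (rule inj_onI)
    fix x y assume "x \<in> J 0 r \<times> J r k" "y \<in> J 0 r \<times> J r k"
      "(case x of (a, b) \<Rightarrow> a @ Suc r # b) = (case y of (a, b) \<Rightarrow> a @ Suc r # b)"
    then show "x = y"
    proof (cases x, cases y)
      fix a b a' b' assume H: "x \<in> J 0 r \<times> J r k" "y \<in> J 0 r \<times> J r k"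
        "(case x of (a, b) \<Rightarrow> a @ Suc r # b) = (case y of (a, b) \<Rightarrow> a @ Suc r # b)"
        "x = (a, b)" "y = (a', b')"
      then have "length a = length a'" by (auto simp: J_len)
      then show "x = y" using H by (simp add: append_eq_append_conv)
    qed
  qed
  have "(\<Sum>g\<in>J 0 (Suc m). f g) = sum f A0 + sum f (\<Union>r\<in>{..<Suc m}. Ar r)"
    unfolding eq using finA0 finAr disj0 by (intro sum.union_disjoint) auto
  also have "sum f A0 = (\<Sum>g\<in>J 0 m. f (0 # g))"
    unfolding A0_def by (rule sum.reindex_cong[where l = "Cons 0"]) (auto simp: inj_on_def)
  also have "sum f (\<Union>r\<in>{..<Suc m}. Ar r) = (\<Sum>r<Suc m. sum f (Ar r))"
    using finAr disjr by (intro sum.UNION_disjoint) auto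
  also have "\<dots> = (\<Sum>r<Suc m. \<Sum>a\<in>J 0 r. \<Sum>b\<in>J r (m - r). f (a @ Suc r # b))"
  proof (rule sum.cong[OF refl])
    fix r
    have "sum f (Ar r) = (\<Sum>x\<in>J 0 r \<times> J r (m - r). f (case x of (a, b) \<Rightarrow> a @ Suc r # b))"
      unfolding Ar_def by (rule sum.reindex_cong[OF inj]) auto
    also have "\<dots> = (\<Sum>a\<in>J 0 r. \<Sum>b\<in>J r (m - r). f (a @ Suc r # b))"
      by (subst sum.cartesian_product) (simp add: case_prod_beta')
    finally show "sum f (Ar r) = (\<Sum>a\<in>J 0 r. \<Sum>b\<in>J r (m - r). f (a @ Suc r # b))" .
  qed
  finally show ?thesis .
qed

definition XX :: "int poly" where "XX = [:0, 1:]"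
definition YY :: "int poly" where "YY = [:1, 1:]"

lemma YY_eq: "YY = 1 + XX"
  by (simp add: one_pCons XX_def YY_def)

lemma YY_nz: "YY \<noteq> 0" by (simp add: YY_def)

definition wc :: "bool \<Rightarrow> nat list \<Rightarrow> bool list" where
  "wc c g = (if c then aw (0 # g) else aw g)"

definition ell :: "bool \<Rightarrow> nat list \<Rightarrow> int poly" where
  "ell c g = XX ^ cnt (wc c g)"

definition wt :: "bool \<Rightarrow> nat list \<Rightarrow> int poly" where
  "wt c g = (if rep (wc c g) then XX ^ cnt (wc c g) * YY ^ (length g - 2 * cnt (wc c g)) else 0)"

definition Ls :: "bool \<Rightarrow> nat \<Rightarrow> int poly" where
  "Ls c m = (\<Sum>g\<in>J 0 m. ell c g)"

definition Gs :: "bool \<Rightarrow> nat \<Rightarrow> int poly" where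
  "Gs c m = (\<Sum>g\<in>J 0 m. wt c g)"

lemma cnt_Nil[simp]: "cnt [] = 0" by (simp add: cnt_def)
lemma cnt_Cons[simp]: "cnt (x # xs) = (if x then Suc (cnt xs) else cnt xs)" by (simp add: cnt_def)
lemma cnt_append[simp]: "cnt (xs @ ys) = cnt xs + cnt ys" by (simp add: cnt_def)

lemma length_wc: "length (wc c g) \<le> length g"
  by (simp add: wc_def length_aw)

lemma length_wcT: "length (wc True g) = length g"
  by (simp add: wc_def length_aw)

lemma rep_wc_le: "rep (wc c g) \<Longrightarrow> 2 * cnt (wc c g) \<le> length g"
  using rep_cnt[of "wc c g"] length_wc[of c g] by linarith

lemma rep_False_Cons: "rep (False # w) = rep w"
  by (cases w) (auto simp: rep_def lastN_def noAA_False)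

lemma rep_snoc_True: "\<not> rep (W @ [True])"
  by (simp add: rep_def lastN_def)

lemma rep_mid: "rep (W @ True # False # w) = (rep W \<and> rep w)"
proof -
  have "noAA (W @ True # False # w) = (noAA W \<and> noAA w \<and> \<not> (W \<noteq> [] \<and> last W))"
    by (simp add: noAA_append noAA_False)
  moreover have "lastN (W @ True # False # w) = lastN w"
    by (cases w) (auto simp: lastN_def)
  ultimately show ?thesis by (auto simp: rep_def lastN_def)
qed

lemma aw_Suc_J: "b \<in> J r k \<Longrightarrow> aw (Suc r # b) = (if b = [] then [] else False # aw b)"
proof (cases b)
  case (Cons y b')
  assume "b \<in> J r k"
  then have "k > 0" "b ! 0 \<le> r + 0 + 1" using Cons J_bound[of b r k 0] by (auto simp: J_def)
  then show ?thesis using Cons by simp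
qed simp

lemma last_le: "a \<in> J 0 r \<Longrightarrow> a \<noteq> [] \<Longrightarrow> last a < Suc r"
  using J0_set_le[of a r "last a"] by simp

lemma wc_cat:
  assumes a: "a \<in> J 0 r" and b: "b \<in> J r k"
  shows "wc c (a @ Suc r # b) = (if c \<or> a \<noteq> [] then wc c a @ [True] else []) @ (if b = [] then [] else False # aw b)"
proof -
  have B: "aw (Suc r # b) = (if b = [] then [] else False # aw b)" using aw_Suc_J[OF b] .
  show ?thesis
  proof (cases c)
    case True
    have "last (0 # a) < Suc r" using last_le[OF a] by (cases "a = []") auto
    then have "aw ((0 # a) @ Suc r # b) = aw (0 # a) @ True # aw (Suc r # b)"
      using aw_append[of "0 # a" "Suc r" b] by simp
    then show ?thesis using True B by (simp add: wc_def)
  next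
    case False
    show ?thesis
    proof (cases "a = []")
      case True then show ?thesis using False B by (simp add: wc_def)
    next
      case ne: False
      have "aw (a @ Suc r # b) = aw a @ True # aw (Suc r # b)"
        using aw_append[OF ne, of "Suc r" b] last_le[OF a ne] by simp
      then show ?thesis using False ne B by (simp add: wc_def)
    qed
  qed
qed

lemma wc_Cons0: "cnt (wc c (0 # g)) = cnt (wc True g) \<and> rep (wc c (0 # g)) = rep (wc True g)"
  by (cases c) (simp_all add: wc_def rep_False_Cons)

lemma ell_Cons0: "ell c (0 # g) = ell True g"
  using wc_Cons0[of c g] by (simp add: ell_def)

lemma wt_Cons0: "wt c (0 # g) = YY * wt True g"
proof (cases "rep (wc True g)")
  case True
  have le: "2 * cnt (wc True g) \<le> length g" using rep_wc_le[OF True] .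
  have "length (0 # g) - 2 * cnt (wc True g) = Suc (length g - 2 * cnt (wc True g))" using le by simp
  then show ?thesis using wc_Cons0[of c g] True by (simp add: wt_def)
next
  case False then show ?thesis using wc_Cons0[of c g] by (simp add: wt_def)
qed

lemma ell_cat:
  assumes a: "a \<in> J 0 r" and b: "b \<in> J r k"
  shows "ell c (a @ Suc r # b) = (if c \<or> a \<noteq> [] then XX * ell c a else 1) * ell False b"
  using wc_cat[OF a b, of c] by (auto simp: ell_def wc_def power_add)

lemma wt_cat1:
  assumes a: "a \<in> J 0 r" and b: "b \<in> J r k" and e: "c \<or> a \<noteq> []"
  shows "YY * wt c (a @ Suc r # b) = (if b = [] then 0 else XX * wt c a * wt False b)"
proof (cases "b = []")
  case True
  then show ?thesis using wc_cat[OF a b, of c] e by (simp add: wt_def rep_snoc_True)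
next
  case False
  have w: "wc c (a @ Suc r # b) = wc c a @ True # False # aw b"
    using wc_cat[OF a b, of c] e False by simp
  have wb: "wc False b = aw b" by (simp add: wc_def)
  have la: "length a = r" using J_len[OF a] .
  show ?thesis
  proof (cases "rep (wc c a) \<and> rep (aw b)")
    case True
    define ka where "ka = cnt (wc c a)"
    define kb where "kb = cnt (aw b)"
    have h1: "2 * ka \<le> r" using rep_wc_le[of c a] True la by (simp add: ka_def)
    have h2: "2 * kb \<le> length b - 1" using rep_cnt[of "aw b"] True by (simp add: kb_def length_aw)
    have lbpos: "0 < length b" using False by simp
    have L: "length (a @ Suc r # b) = r + 1 + length b" using la by simp
    have C: "cnt (wc c (a @ Suc r # b)) = ka + 1 + kb" unfolding w ka_def kb_def by simp
    have ex: "Suc (length (a @ Suc r # b) - 2 * cnt (wc c (a @ Suc r # b))) = (r - 2 * ka) + (length b - 2 * kb)"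
      unfolding L C using h1 h2 lbpos by presburger
    have "YY * wt c (a @ Suc r # b) = XX ^ Suc (ka + kb) * YY ^ Suc (length (a @ Suc r # b) - 2 * cnt (wc c (a @ Suc r # b)))"
      using True unfolding wt_def w by (simp add: rep_mid ka_def kb_def mult_ac)
    also have "\<dots> = XX * (XX ^ ka * YY ^ (r - 2 * ka)) * (XX ^ kb * YY ^ (length b - 2 * kb))"
      unfolding ex by (simp add: power_add mult_ac)
    also have "\<dots> = XX * wt c a * wt False b"
      using True la by (simp add: wt_def wb ka_def kb_def)
    finally show ?thesis using False by simp
  next
    case nr: False
    then have "wt c a = 0 \<or> wt False b = 0" by (auto simp: wt_def wb)
    moreover have "\<not> rep (wc c (a @ Suc r # b))" using nr unfolding w rep_mid by simp
    then have "wt c (a @ Suc r # b) = 0" unfolding wt_def by simp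
    ultimately show ?thesis using False by auto
  qed
qed

lemma wt_cat2:
  assumes b: "b \<in> J 0 k"
  shows "wt False (Suc 0 # b) = YY * wt False b"
proof -
  have w: "wc False (Suc 0 # b) = (if b = [] then [] else False # aw b)"
    using aw_Suc_J[OF b] by (simp add: wc_def)
  have wb: "wc False b = aw b" by (simp add: wc_def)
  have r: "rep (wc False (Suc 0 # b)) = rep (aw b)" and c: "cnt (wc False (Suc 0 # b)) = cnt (aw b)"
    by (cases "b = []", simp_all add: w rep_False_Cons, simp add: rep_def lastN_def wc_def)+
  show ?thesis
  proof (cases "rep (aw b)")
    case True
    have "2 * cnt (aw b) \<le> length b" using rep_wc_le[of False b] True by (simp add: wb)
    then have "length (Suc 0 # b) - 2 * cnt (aw b) = Suc (length b - 2 * cnt (aw b))" by simp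
    then show ?thesis unfolding wt_def r c wb using True by simp
  next
    case False then show ?thesis unfolding wt_def r c wb by simp
  qed
qed

lemma ell_shift: "ell False (map (sh d) b) = ell False b"
  by (simp add: ell_def wc_def aw_map sh_less)

lemma wt_shift: "wt False (map (sh d) b) = wt False b"
  by (simp add: wt_def wc_def aw_map sh_less)

lemma sumJ_ell: "(\<Sum>b\<in>J d k. ell False b) = Ls False k"
  unfolding Ls_def by (subst sum_shift) (simp add: ell_shift)

lemma sumJ_wt: "(\<Sum>b\<in>J d k. wt False b) = Gs False k"
  unfolding Gs_def by (subst sum_shift) (simp add: wt_shift)

lemma J0_ne: "a \<in> J 0 r \<Longrightarrow> (a \<noteq> []) = (0 < r)"
  using J_len[of a 0 r] by auto

lemma Ls_0: "Ls c 0 = 1"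
  by (simp add: Ls_def J0_Nil ell_def wc_def)

lemma Gs_0: "Gs c 0 = 1"
  by (simp add: Gs_def J0_Nil wt_def wc_def rep_def lastN_def)

lemma Ls_rec: "Ls c (Suc m) = Ls True m + (\<Sum>r<Suc m. (if c \<or> 0 < r then XX * Ls c r else 1) * Ls False (m - r))"
proof -
  have "Ls c (Suc m) = (\<Sum>g\<in>J 0 m. ell c (0 # g)) + (\<Sum>r<Suc m. \<Sum>a\<in>J 0 r. \<Sum>b\<in>J r (m - r). ell c (a @ Suc r # b))"
    unfolding Ls_def by (rule sum_decomp)
  also have "(\<Sum>g\<in>J 0 m. ell c (0 # g)) = Ls True m" by (simp add: Ls_def ell_Cons0)
  also have "(\<Sum>r<Suc m. \<Sum>a\<in>J 0 r. \<Sum>b\<in>J r (m - r). ell c (a @ Suc r # b)) =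
      (\<Sum>r<Suc m. (if c \<or> 0 < r then XX * Ls c r else 1) * Ls False (m - r))"
  proof (rule sum.cong[OF refl])
    fix r
    have "(\<Sum>a\<in>J 0 r. \<Sum>b\<in>J r (m - r). ell c (a @ Suc r # b)) =
        (\<Sum>a\<in>J 0 r. (if c \<or> 0 < r then XX * ell c a else 1) * Ls False (m - r))"
    proof (rule sum.cong[OF refl])
      fix a assume a: "a \<in> J 0 r"
      have "(\<Sum>b\<in>J r (m - r). ell c (a @ Suc r # b)) = (\<Sum>b\<in>J r (m - r). (if c \<or> 0 < r then XX * ell c a else 1) * ell False b)"
        by (rule sum.cong[OF refl]) (simp add: ell_cat[OF a] J0_ne[OF a])
      also have "\<dots> = (if c \<or> 0 < r then XX * ell c a else 1) * Ls False (m - r)"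
        by (simp add: sum_distrib_left[symmetric] sumJ_ell)
      finally show "(\<Sum>b\<in>J r (m - r). ell c (a @ Suc r # b)) = (if c \<or> 0 < r then XX * ell c a else 1) * Ls False (m - r)" .
    qed
    also have "\<dots> = (if c \<or> 0 < r then XX * Ls c r else 1) * Ls False (m - r)"
    proof (cases "c \<or> 0 < r")
      case True then show ?thesis by (simp add: Ls_def sum_distrib_left sum_distrib_right mult_ac)
    next
      case False then show ?thesis by (simp add: J0_Nil)
    qed
    finally show "(\<Sum>a\<in>J 0 r. \<Sum>b\<in>J r (m - r). ell c (a @ Suc r # b)) = (if c \<or> 0 < r then XX * Ls c r else 1) * Ls False (m - r)" .
  qed
  finally show ?thesis .
qed

lemma Gs_rec: "YY * Gs c (Suc m) = YY * YY * Gs True m +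
   (\<Sum>r<Suc m. if c \<or> 0 < r then (if m - r = 0 then 0 else XX * Gs c r * Gs False (m - r)) else YY * YY * Gs False m)"
proof -
  have "YY * Gs c (Suc m) = YY * ((\<Sum>g\<in>J 0 m. wt c (0 # g)) + (\<Sum>r<Suc m. \<Sum>a\<in>J 0 r. \<Sum>b\<in>J r (m - r). wt c (a @ Suc r # b)))"
    unfolding Gs_def by (subst sum_decomp) rule
  also have "(\<Sum>g\<in>J 0 m. wt c (0 # g)) = YY * Gs True m" by (simp add: Gs_def wt_Cons0 sum_distrib_left)
  also have "YY * (YY * Gs True m + (\<Sum>r<Suc m. \<Sum>a\<in>J 0 r. \<Sum>b\<in>J r (m - r). wt c (a @ Suc r # b))) =
      YY * YY * Gs True m + (\<Sum>r<Suc m. YY * (\<Sum>a\<in>J 0 r. \<Sum>b\<in>J r (m - r). wt c (a @ Suc r # b)))"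
    by (simp add: distrib_left sum_distrib_left mult_ac)
  also have "(\<Sum>r<Suc m. YY * (\<Sum>a\<in>J 0 r. \<Sum>b\<in>J r (m - r). wt c (a @ Suc r # b))) =
      (\<Sum>r<Suc m. if c \<or> 0 < r then (if m - r = 0 then 0 else XX * Gs c r * Gs False (m - r)) else YY * YY * Gs False m)"
  proof (rule sum.cong[OF refl])
    fix r assume r: "r \<in> {..<Suc m}"
    show "YY * (\<Sum>a\<in>J 0 r. \<Sum>b\<in>J r (m - r). wt c (a @ Suc r # b)) =
      (if c \<or> 0 < r then (if m - r = 0 then 0 else XX * Gs c r * Gs False (m - r)) else YY * YY * Gs False m)"
    proof (cases "c \<or> 0 < r")
      case True
      have "YY * (\<Sum>a\<in>J 0 r. \<Sum>b\<in>J r (m - r). wt c (a @ Suc r # b)) =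
          (\<Sum>a\<in>J 0 r. \<Sum>b\<in>J r (m - r). (if b = [] then 0 else XX * wt c a * wt False b))"
        by (simp add: sum_distrib_left wt_cat1 J0_ne True)
      also have "\<dots> = (\<Sum>a\<in>J 0 r. \<Sum>b\<in>J r (m - r). (if m - r = 0 then 0 else XX * wt c a * wt False b))"
        by (intro sum.cong refl) (auto dest: J_len)
      also have "\<dots> = (if m - r = 0 then 0 else XX * Gs c r * Gs False (m - r))"
      proof (cases "m - r = 0")
        case False
        have "(\<Sum>a\<in>J 0 r. \<Sum>b\<in>J r (m - r). XX * wt c a * wt False b) = (\<Sum>a\<in>J 0 r. XX * wt c a * (\<Sum>b\<in>J r (m - r). wt False b))"
          by (rule sum.cong[OF refl]) (simp add: sum_distrib_left)
        also have "\<dots> = (\<Sum>a\<in>J 0 r. XX * wt c a * Gs False (m - r))"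
          by (simp only: sumJ_wt)
        also have "\<dots> = XX * Gs c r * Gs False (m - r)"
          unfolding Gs_def[of c r] by (simp add: sum_distrib_left sum_distrib_right)
        finally show ?thesis using False by simp
      qed simp
      finally show ?thesis using True by simp
    next
      case False
      then have "r = 0" "\<not> c" by auto
      then show ?thesis
        by (simp add: J0_Nil wt_cat2 sum_distrib_left Gs_def mult_ac)
    qed
  qed
  finally show ?thesis .
qed

lemma main: "Gs True m = Ls True m \<and> (0 < m \<longrightarrow> Gs False m = YY * Ls False m)"
proof (induction m rule: less_induct)
  case (less m)
  show ?case
  proof (cases m)
    case 0 then show ?thesis by (simp add: Gs_0 Ls_0)
  next
    case (Suc m')
    have GT: "Gs True r = Ls True r" if "r \<le> m'" for r using less.IH[of r] that Suc by simp
    have GF: "Gs False r = YY * Ls False r" if "0 < r" "r \<le> m'" for r using less.IH[of r] that Suc by simp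
    define S where "S = (\<Sum>r<m'. XX * Ls True r * Ls False (m' - r))"
    have A1: "YY * Gs True (Suc m') = YY * YY * Ls True m' + YY * S"
    proof -
      have "(\<Sum>r<Suc m'. if True \<or> 0 < r then (if m' - r = 0 then 0 else XX * Gs True r * Gs False (m' - r)) else YY * YY * Gs False m')
          = (\<Sum>r<m'. if m' - r = 0 then 0 else XX * Gs True r * Gs False (m' - r))"
        by simp
      also have "\<dots> = (\<Sum>r<m'. YY * (XX * Ls True r * Ls False (m' - r)))"
        by (rule sum.cong[OF refl]) (simp add: GT GF mult_ac)
      also have "\<dots> = YY * S" unfolding S_def by (simp add: sum_distrib_left)
      finally show ?thesis using Gs_rec[of True m'] GT[of m'] by simp
    qed
    have A2: "Ls True (Suc m') = YY * Ls True m' + S"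
    proof -
      have "(\<Sum>r<Suc m'. (if True \<or> 0 < r then XX * Ls True r else 1) * Ls False (m' - r)) = S + XX * Ls True m'"
        by (simp add: S_def Ls_0)
      then show ?thesis using Ls_rec[of True m'] by (simp add: YY_eq algebra_simps)
    qed
    have T: "Gs True m = Ls True m"
    proof -
      have "YY * Gs True (Suc m') = YY * Ls True (Suc m')" using A1 A2 by (simp add: algebra_simps)
      then show ?thesis using Suc YY_nz by simp
    qed
    have F: "Gs False m = YY * Ls False m"
    proof -
      define T where "T r = (if 0 < r then (if m' - r = 0 then 0 else XX * Gs False r * Gs False (m' - r)) else YY * YY * Gs False m')" for r
      have G0: "YY * Gs False (Suc m') = YY * YY * Ls True m' + (\<Sum>r<Suc m'. T r)"
        using Gs_rec[of False m'] GT[of m'] by (simp add: T_def del: sum.lessThan_Suc)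
      have G1: "YY * Gs False (Suc m') = YY * YY * Ls True m' + (T 0 + (\<Sum>r<m'. T (Suc r)))"
        using G0 by (simp only: sum.lessThan_Suc_shift)
      have L1: "Ls False (Suc m') = Ls True m' + Ls False m' + (\<Sum>r<m'. XX * Ls False (Suc r) * Ls False (m' - Suc r))"
      proof -
        have "(\<Sum>r<Suc m'. (if False \<or> 0 < r then XX * Ls False r else 1) * Ls False (m' - r))
           = Ls False m' + (\<Sum>r<m'. XX * Ls False (Suc r) * Ls False (m' - Suc r))"
          by (simp only: sum.lessThan_Suc_shift) simp
        then show ?thesis using Ls_rec[of False m'] by (simp add: algebra_simps del: sum.lessThan_Suc)
      qed
      show ?thesis
      proof (cases m')
        case 0
        then show ?thesis using G1 L1 YY_nz \<open>m = Suc m'\<close> by (simp add: T_def Gs_0 Ls_0 GT algebra_simps)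
      next
        case (Suc m'')
        define S' where "S' = (\<Sum>r<m''. XX * Ls False (Suc r) * Ls False (m' - Suc r))"
        have "(\<Sum>r<m'. T (Suc r)) = (\<Sum>r<m''. T (Suc r)) + T m'" using Suc by simp
        also have "T m' = 0" using Suc by (simp add: T_def)
        also have "(\<Sum>r<m''. T (Suc r)) = (\<Sum>r<m''. YY * YY * (XX * Ls False (Suc r) * Ls False (m' - Suc r)))"
          by (rule sum.cong[OF refl]) (use Suc in \<open>simp add: T_def GF mult_ac\<close>)
        also have "\<dots> = YY * YY * S'" unfolding S'_def by (simp add: sum_distrib_left)
        finally have G2: "(\<Sum>r<m'. T (Suc r)) = YY * YY * S'" by simp
        have L2: "(\<Sum>r<m'. XX * Ls False (Suc r) * Ls False (m' - Suc r)) = S' + XX * Ls False m'"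
          using Suc by (simp add: S'_def Ls_0)
        have T0: "T 0 = YY * YY * (YY * Ls False m')" using GF[of m'] Suc by (simp add: T_def)
        have "YY * Gs False (Suc m') = YY * (YY * Ls False (Suc m'))"
          using G1 G2 T0 L1 L2 by (simp add: YY_eq algebra_simps)
        then show ?thesis using \<open>m = Suc m'\<close> YY_nz by simp
      qed
    qed
    show ?thesis using T F by simp
  qed
qed

lemma avoid_pinc:
  assumes ne: "e \<noteq> []" and z: "e ! 0 = 0"
  shows "avoids021 e = pinc e"
proof
  assume av: "avoids021 e"
  show "pinc e" unfolding pinc_def
  proof (intro allI impI)
    fix j k assume jk: "j < k" "k < length e" "0 < e ! k"
    show "e ! j \<le> e ! k"
    proof (rule ccontr)
      assume "\<not> e ! j \<le> e ! k"
      then have lt: "e ! k < e ! j" by simp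
      then have "j \<noteq> 0" using z by (cases "j = 0") auto
      then have "1 \<le> (1::nat) \<and> 1 < Suc j \<and> Suc j < Suc k \<and> Suc k \<le> length e \<and>
          e ! (1 - 1) < e ! (Suc k - 1) \<and> e ! (Suc k - 1) < e ! (Suc j - 1)"
        using jk lt z by simp
      then show False using av unfolding avoids021_def by blast
    qed
  qed
next
  assume p: "pinc e"
  show "avoids021 e" unfolding avoids021_def
  proof
    assume "\<exists>i j k. 1 \<le> i \<and> i < j \<and> j < k \<and> k \<le> length e \<and>
      e ! (i - 1) < e ! (k - 1) \<and> e ! (k - 1) < e ! (j - 1)"
    then obtain i j k where H: "1 \<le> i" "i < j" "j < k" "k \<le> length e"
      "e ! (i - 1) < e ! (k - 1)" "e ! (k - 1) < e ! (j - 1)" by blast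
    have a1: "j - 1 < k - 1" "k - 1 < length e" "0 < e ! (k - 1)" using H by auto
    have "e ! (j - 1) \<le> e ! (k - 1)" using p[unfolded pinc_def, rule_format, OF a1] .
    then show False using H by simp
  qed
qed

lemma I021_eq: "1 \<le> n \<Longrightarrow> I021 n = Cons 0 ` J 0 (n - 1)"
proof
  assume n: "1 \<le> n"
  show "I021 n \<subseteq> Cons 0 ` J 0 (n - 1)"
  proof
    fix e assume e: "e \<in> I021 n"
    have le: "length e = n" and b: "\<forall>i\<in>{1..n}. e ! (i - 1) \<le> i - 1" and av: "avoids021 e"
      using e by (auto simp: I021_def inv_seqs_def)
    have b': "e ! i \<le> i" if "i < n" for i using b[rule_format, of "Suc i"] that by simp
    obtain x t where et: "e = x # t" using le n by (cases e) auto
    have x0: "x = 0" using b'[of 0] n et by simp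
    have pe: "pinc e" using avoid_pinc[of e] av et x0 by simp
    have "t \<in> J 0 (n - 1)"
    proof -
      have "\<forall>r<n - 1. t ! r = 0 \<or> (0 < t ! r \<and> t ! r \<le> 0 + r + 1)"
      proof (intro allI impI)
        fix r assume "r < n - 1"
        then have "e ! Suc r \<le> Suc r" using b'[of "Suc r"] by simp
        then show "t ! r = 0 \<or> (0 < t ! r \<and> t ! r \<le> 0 + r + 1)" using et by auto
      qed
      moreover have "pinc t" using pe et by (simp add: pinc_Cons)
      ultimately show ?thesis using le et by (simp add: J_def)
    qed
    then show "e \<in> Cons 0 ` J 0 (n - 1)" using et x0 by blast
  qed
next
  assume n: "1 \<le> n"
  show "Cons 0 ` J 0 (n - 1) \<subseteq> I021 n"
  proof
    fix e assume "e \<in> Cons 0 ` J 0 (n - 1)"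
    then obtain g where g: "g \<in> J 0 (n - 1)" "e = 0 # g" by auto
    have lg: "length g = n - 1" using g by (simp add: J_def)
    have "\<forall>i\<in>{1..n}. e ! (i - 1) \<le> i - 1"
    proof
      fix i assume i: "i \<in> {1..n}"
      show "e ! (i - 1) \<le> i - 1"
      proof (cases "i - 1")
        case (Suc j)
        then have "j < n - 1" using i by auto
        then have "g ! j \<le> 0 + j + 1" using J_bound[OF g(1)] by blast
        then show ?thesis using g(2) Suc by simp
      qed (simp add: g(2))
    qed
    moreover have "pinc e" using g by (simp add: pinc_Cons J_def)
    then have "avoids021 e" using avoid_pinc[of e] g(2) by simp
    ultimately show "e \<in> I021 n" using lg n g(2) by (auto simp: I021_def inv_seqs_def)
  qed
qed

lemma asc_aw: "asc e = cnt (aw e)"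
proof -
  have "cnt (aw e) = card {i. i < length (aw e) \<and> aw e ! i}"
    unfolding cnt_def by (simp add: length_filter_conv_card)
  also have "{i. i < length (aw e) \<and> aw e ! i} = {i. i + 1 < length e \<and> e ! i < e ! (i + 1)}"
    by (auto simp: length_aw aw_nth)
  also have "card \<dots> = card (Suc ` {i. i + 1 < length e \<and> e ! i < e ! (i + 1)})"
    by (simp add: card_image)
  also have "Suc ` {i. i + 1 < length e \<and> e ! i < e ! (i + 1)} = ASC e"
  proof
    show "Suc ` {i. i + 1 < length e \<and> e ! i < e ! (i + 1)} \<subseteq> ASC e" by (auto simp: ASC_def)
    show "ASC e \<subseteq> Suc ` {i. i + 1 < length e \<and> e ! i < e ! (i + 1)}"
    proof
      fix i assume "i \<in> ASC e"
      then have "1 \<le> i" "i \<le> length e - 1" "e ! (i - 1) < e ! i" by (auto simp: ASC_def)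
      then show "i \<in> Suc ` {i. i + 1 < length e \<and> e ! i < e ! (i + 1)}"
        by (intro image_eqI[of _ _ "i - 1"]) auto
    qed
  qed
  finally show ?thesis by (simp add: asc_def)
qed

lemma nda_aw: "no_double_ascent e = noAA (aw e)"
proof -
  have "no_double_ascent e = (\<forall>j. j + 2 < length e \<longrightarrow> \<not> (e ! j < e ! (j + 1) \<and> e ! (j + 1) < e ! (j + 2)))"
    unfolding no_double_ascent_def
  proof
    assume H: "\<forall>i\<in>{1..length e - 2}. \<not> {i, i + 1} \<subseteq> ASC e"
    show "\<forall>j. j + 2 < length e \<longrightarrow> \<not> (e ! j < e ! (j + 1) \<and> e ! (j + 1) < e ! (j + 2))"
    proof (intro allI impI)
      fix j assume j: "j + 2 < length e"
      have "\<not> {Suc j, Suc j + 1} \<subseteq> ASC e" using H j by auto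
      then show "\<not> (e ! j < e ! (j + 1) \<and> e ! (j + 1) < e ! (j + 2))" using j by (auto simp: ASC_def)
    qed
  next
    assume H: "\<forall>j. j + 2 < length e \<longrightarrow> \<not> (e ! j < e ! (j + 1) \<and> e ! (j + 1) < e ! (j + 2))"
    show "\<forall>i\<in>{1..length e - 2}. \<not> {i, i + 1} \<subseteq> ASC e"
    proof
      fix i assume i: "i \<in> {1..length e - 2}"
      then obtain j where j: "i = Suc j" by (cases i) auto
      then have "j + 2 < length e" using i by auto
      then show "\<not> {i, i + 1} \<subseteq> ASC e" using H j by (auto simp: ASC_def)
    qed
  qed
  also have "\<dots> = noAA (aw e)"
    unfolding noAA_nth by (auto simp: length_aw aw_nth)
  finally show ?thesis .
qed

lemma lastN_aw: "lastN (aw e) = (2 \<le> length e \<longrightarrow> e ! (length e - 2) \<ge> e ! (length e - 1))"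
proof (cases "2 \<le> length e")
  case True
  then have "aw e \<noteq> []" using length_aw[of e] by auto
  then have "last (aw e) = aw e ! (length e - 2)" using length_aw[of e] by (simp add: last_conv_nth numeral_2_eq_2)
  also have "\<dots> = (e ! (length e - 2) < e ! (length e - 2 + 1))" using True by (intro aw_nth) simp
  finally show ?thesis using True \<open>aw e \<noteq> []\<close> by (auto simp: lastN_def Suc_diff_Suc numeral_2_eq_2)
next
  case False
  then have "aw e = []" using length_aw[of e] by auto
  then show ?thesis using False by (simp add: lastN_def)
qed

lemma tilde_eq:
  assumes n: "1 \<le> n"
  shows "I021_tilde n k = Cons 0 ` {g \<in> J 0 (n - 1). rep (wc True g) \<and> cnt (wc True g) = k}"
proof -
  have key: "e \<in> I021_tilde n k \<longleftrightarrow> e \<in> I021 n \<and> rep (aw e) \<and> cnt (aw e) = k" for e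
  proof -
    have "e \<in> I021 n \<Longrightarrow> length e = n" by (simp add: I021_def inv_seqs_def)
    then show ?thesis
      unfolding I021_tilde_def rep_def using nda_aw[of e] lastN_aw[of e] asc_aw[of e] by auto
  qed
  show ?thesis
  proof
    show "I021_tilde n k \<subseteq> Cons 0 ` {g \<in> J 0 (n - 1). rep (wc True g) \<and> cnt (wc True g) = k}"
    proof
      fix e assume "e \<in> I021_tilde n k"
      then have e: "e \<in> I021 n" "rep (aw e)" "cnt (aw e) = k" using key by auto
      then obtain g where g: "g \<in> J 0 (n - 1)" "e = 0 # g" using I021_eq[OF n] by auto
      then have "rep (wc True g) \<and> cnt (wc True g) = k" using e by (simp add: wc_def)
      then show "e \<in> Cons 0 ` {g \<in> J 0 (n - 1). rep (wc True g) \<and> cnt (wc True g) = k}" using g by blast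
    qed
    show "Cons 0 ` {g \<in> J 0 (n - 1). rep (wc True g) \<and> cnt (wc True g) = k} \<subseteq> I021_tilde n k"
    proof
      fix e assume "e \<in> Cons 0 ` {g \<in> J 0 (n - 1). rep (wc True g) \<and> cnt (wc True g) = k}"
      then obtain g where g: "g \<in> J 0 (n - 1)" "rep (wc True g)" "cnt (wc True g) = k" "e = 0 # g" by blast
      then have "e \<in> I021 n" using I021_eq[OF n] by blast
      then show "e \<in> I021_tilde n k" using key g by (simp add: wc_def)
    qed
  qed
qed

theorem theorem4p6:
  fixes n :: nat
  assumes "n \<ge> 1"
  shows "(\<Sum>e\<in>I021 n. [:0, 1:] ^ asc e) =
    (\<Sum>k = 0..(n - 1) div 2.
       of_nat (card (I021_tilde n k)) * [:0, 1:] ^ k * [:1, 1:] ^ (n - 1 - 2 * k)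
       :: int poly)"
proof -
  have n: "1 \<le> n" using assms .
  let ?S = "{g \<in> J 0 (n - 1). rep (wc True g)}"
  have "(\<Sum>e\<in>I021 n. [:0, 1:] ^ asc e) = (\<Sum>g\<in>J 0 (n - 1). ([:0, 1:] :: int poly) ^ asc (0 # g))"
    unfolding I021_eq[OF n] by (rule sum.reindex_cong[where l = "Cons 0"]) (auto simp: inj_on_def)
  also have "\<dots> = Ls True (n - 1)"
    unfolding Ls_def ell_def XX_def by (rule sum.cong[OF refl]) (simp add: asc_aw wc_def)
  also have "\<dots> = Gs True (n - 1)" using main[of "n - 1"] by simp
  also have "\<dots> = (\<Sum>g\<in>?S. wt True g)"
    unfolding Gs_def by (simp add: sum.inter_filter finite_J wt_def)
  also have "\<dots> = (\<Sum>k = 0..(n - 1) div 2. \<Sum>g\<in>{g. g \<in> ?S \<and> cnt (wc True g) = k}. wt True g)"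
  proof (rule sum.group[symmetric])
    show "finite ?S" using finite_J by simp
    show "finite {0..(n - 1) div 2}" by simp
    show "(\<lambda>g. cnt (wc True g)) ` ?S \<subseteq> {0..(n - 1) div 2}"
    proof
      fix k assume "k \<in> (\<lambda>g. cnt (wc True g)) ` ?S"
      then obtain g where g: "g \<in> J 0 (n - 1)" "rep (wc True g)" "k = cnt (wc True g)" by auto
      have "2 * k \<le> n - 1" using rep_wc_le[OF g(2)] g(1,3) by (simp add: J_len)
      then show "k \<in> {0..(n - 1) div 2}" by simp
    qed
  qed
  also have "\<dots> = (\<Sum>k = 0..(n - 1) div 2.
       of_nat (card (I021_tilde n k)) * [:0, 1:] ^ k * [:1, 1:] ^ (n - 1 - 2 * k))"
  proof (rule sum.cong[OF refl])
    fix k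
    let ?T = "{g. g \<in> ?S \<and> cnt (wc True g) = k}"
    have "(\<Sum>g\<in>?T. wt True g) = (\<Sum>g\<in>?T. XX ^ k * YY ^ (n - 1 - 2 * k))"
      by (rule sum.cong[OF refl]) (auto simp: wt_def J_len)
    also have "\<dots> = of_nat (card ?T) * (XX ^ k * YY ^ (n - 1 - 2 * k))" by simp
    also have "card ?T = card (I021_tilde n k)"
    proof -
      have "?T = {g \<in> J 0 (n - 1). rep (wc True g) \<and> cnt (wc True g) = k}" by auto
      then show ?thesis unfolding tilde_eq[OF n] by (simp add: card_image)
    qed
    finally show "(\<Sum>g\<in>?T. wt True g) = of_nat (card (I021_tilde n k)) * [:0, 1:] ^ k * [:1, 1:] ^ (n - 1 - 2 * k)"
      by (simp add: XX_def YY_def mult.assoc)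
  qed
  finally show ?thesis .
qed

end
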